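(* For integers $s\ge t\ge 2$, $${\rm dim}_s(K_{1,s}\diamond K_{1,t})=\begin{cases} st+s-1 & \text{if } t=2,\\ st+s & \text{if } t>2.\end{cases}$$
   Context: The modular product $G\diamond H$ has vertex set $V(G)\times V(H)$; distinct vertices $(g,h)$ and $(g',h')$ are adjacent iff ($g=g'$ and $hh'\in E(H)$), or ($gg'\in E(G)$ and $h=h'$), or ($gg'\in E(G)$ and $hh'\in E(H)$), or ($g\neq g'$, $h\neq h'$, $gg'\notin E(G)$ and $hh'\notin E(H)$). For a connected graph $X$, a vertex $z$ strongly resolves distinct vertices $x,y$ if $d_X(y,z)=d_X(y,x)+d_X(x,z)$ or $d_X(x,z)=d_X(x,y)+d_X(y,z)$; a strong metric generator is a set $S\subseteq V(X)$ such that every pair of distinct vertices is strongly resolved by some vertex of $S$; ${\rm dim}_s(X)$, the strong metric dimension, is the minimum cardinality of a strong metric generator. $K_{1,s}$ is the star with $s$ leaves. *)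

theory Defs
  imports Main
begin

text \<open>Simple graphs are given by a vertex set V and a symmetric irreflexive adjacency
relation E (only its restriction to V matters).\<close>

definition is_walk :: "'a set \<Rightarrow> ('a \<Rightarrow> 'a \<Rightarrow> bool) \<Rightarrow> 'a list \<Rightarrow> bool" where
  "is_walk V E xs \<longleftrightarrow> xs \<noteq> [] \<and> set xs \<subseteq> V \<and>
     (\<forall>i. Suc i < length xs \<longrightarrow> E (xs ! i) (xs ! Suc i))"

text \<open>Graph distance: the least number of edges of a walk from x to y
 (meaningful for connected graphs).\<close>
definition gdist :: "'a set \<Rightarrow> ('a \<Rightarrow> 'a \<Rightarrow> bool) \<Rightarrow> 'a \<Rightarrow> 'a \<Rightarrow> nat" where
  "gdist V E x y = (LEAST n. \<exists>xs. is_walk V E xs \<and> hd xs = x \<and> last xs = y \<and> length xs = Suc n)"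

definition strongly_resolves :: "'a set \<Rightarrow> ('a \<Rightarrow> 'a \<Rightarrow> bool) \<Rightarrow> 'a \<Rightarrow> 'a \<Rightarrow> 'a \<Rightarrow> bool" where
  "strongly_resolves V E z x y \<longleftrightarrow>
     gdist V E y z = gdist V E y x + gdist V E x z \<or>
     gdist V E x z = gdist V E x y + gdist V E y z"

definition strong_metric_generator :: "'a set \<Rightarrow> ('a \<Rightarrow> 'a \<Rightarrow> bool) \<Rightarrow> 'a set \<Rightarrow> bool" where
  "strong_metric_generator V E S \<longleftrightarrow> S \<subseteq> V \<and>
     (\<forall>x\<in>V. \<forall>y\<in>V. x \<noteq> y \<longrightarrow> (\<exists>z\<in>S. strongly_resolves V E z x y))"

definition strong_metric_dim :: "'a set \<Rightarrow> ('a \<Rightarrow> 'a \<Rightarrow> bool) \<Rightarrow> nat" where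
  "strong_metric_dim V E = (LEAST k. \<exists>S. strong_metric_generator V E S \<and> card S = k)"

definition modprod_adj :: "('a \<Rightarrow> 'a \<Rightarrow> bool) \<Rightarrow> ('b \<Rightarrow> 'b \<Rightarrow> bool) \<Rightarrow> 'a \<times> 'b \<Rightarrow> 'a \<times> 'b \<Rightarrow> bool" where
  "modprod_adj EG EH p q \<longleftrightarrow> (case p of (g, h) \<Rightarrow> case q of (g', h') \<Rightarrow>
     (g, h) \<noteq> (g', h') \<and>
     ((g = g' \<and> EH h h') \<or> (EG g g' \<and> h = h') \<or> (EG g g' \<and> EH h h') \<or>
      (g \<noteq> g' \<and> h \<noteq> h' \<and> \<not> EG g g' \<and> \<not> EH h h')))"

definition star_V :: "nat \<Rightarrow> nat set" where
  "star_V s = {0..s}"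

definition star_E :: "nat \<Rightarrow> nat \<Rightarrow> bool" where
  "star_E u v \<longleftrightarrow> (u = 0 \<and> v \<noteq> 0) \<or> (u \<noteq> 0 \<and> v = 0)"

end

theory Submission
  imports Defs
begin

lemma walk1: "is_walk V E [x] \<longleftrightarrow> x \<in> V" by (simp add: is_walk_def)

lemma walk2: "is_walk V E [x,y] \<longleftrightarrow> x\<in>V \<and> y\<in>V \<and> E x y"
  by (auto simp: is_walk_def less_Suc_eq)

lemma walk3: "x\<in>V \<Longrightarrow> y\<in>V \<Longrightarrow> w \<in> V \<Longrightarrow> E x w \<Longrightarrow> E w y \<Longrightarrow> is_walk V E [x,w,y]"
  by (auto simp: is_walk_def less_Suc_eq)

lemma gdist_le: "is_walk V E xs \<Longrightarrow> hd xs = x \<Longrightarrow> last xs = y \<Longrightarrow> gdist V E x y \<le> length xs - 1"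
  unfolding gdist_def
  by (rule Least_le) (auto simp: is_walk_def intro!: exI[of _ xs])

lemma gdist_att: "is_walk V E xs \<Longrightarrow> hd xs = x \<Longrightarrow> last xs = y \<Longrightarrow>
   \<exists>ys. is_walk V E ys \<and> hd ys = x \<and> last ys = y \<and> length ys = Suc (gdist V E x y)"
  unfolding gdist_def
  by (rule LeastI_ex) (rule exI[of _ "length xs - 1"], rule exI[of _ xs], auto simp: is_walk_def)

lemma gdist_refl: "x \<in> V \<Longrightarrow> gdist V E x x = 0"
  using gdist_le[of V E "[x]" x x] by (simp add: walk1)

lemma gdist_not0: assumes "is_walk V E xs" "hd xs = x" "last xs = y" "x \<noteq> y"
  shows "gdist V E x y \<noteq> 0"
proof
  assume h: "gdist V E x y = 0"
  from gdist_att[OF assms(1-3)] obtain ys where "hd ys = x" "last ys = y" "length ys = Suc 0"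
    using h by auto
  then show False using assms(4) by (auto simp: length_Suc_conv)
qed

lemma gdist_not1: assumes "is_walk V E xs" "hd xs = x" "last xs = y" "\<not> E x y"
  shows "gdist V E x y \<noteq> 1"
proof
  assume h: "gdist V E x y = 1"
  from gdist_att[OF assms(1-3)] obtain ys where "is_walk V E ys" "hd ys = x" "last ys = y" "length ys = Suc (Suc 0)"
    using h by auto
  then show False using assms(4) by (auto simp: length_Suc_conv walk2)
qed

lemma gdist_adj: "x\<in>V \<Longrightarrow> y\<in>V \<Longrightarrow> E x y \<Longrightarrow> x \<noteq> y \<Longrightarrow> gdist V E x y = 1"
  using gdist_le[of V E "[x,y]" x y] gdist_not0[of V E "[x,y]" x y] by (simp add: walk2)

lemma gdist_two: "x\<in>V \<Longrightarrow> y\<in>V \<Longrightarrow> w\<in>V \<Longrightarrow> E x w \<Longrightarrow> E w y \<Longrightarrow> \<not> E x y \<Longrightarrow> x \<noteq> y \<Longrightarrow> gdist V E x y = 2"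
  using gdist_le[of V E "[x,w,y]" x y] gdist_not0[of V E "[x,w,y]" x y] gdist_not1[of V E "[x,w,y]" x y]
    walk3[of x V y w E] by simp

abbreviation "EE \<equiv> modprod_adj star_E star_E"

lemma E_iff: "EE (a,b) (c,d) \<longleftrightarrow> (a=0\<and>b=0\<and>(c,d)\<noteq>(0,0)) \<or> (c=0\<and>d=0\<and>(a,b)\<noteq>(0,0)) \<or>
  (a=0\<and>b\<noteq>0\<and>c\<noteq>0\<and>d=0) \<or> (a\<noteq>0\<and>b=0\<and>c=0\<and>d\<noteq>0) \<or> (a=0\<and>c\<noteq>0\<and>b\<noteq>0\<and>b=d) \<or>
  (c=0\<and>a\<noteq>0\<and>d\<noteq>0\<and>b=d) \<or> (b=0\<and>a\<noteq>0\<and>d\<noteq>0\<and>a=c) \<or> (d=0\<and>c\<noteq>0\<and>b\<noteq>0\<and>a=c) \<or>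
  (a\<noteq>0\<and>b\<noteq>0\<and>c\<noteq>0\<and>d\<noteq>0\<and>a\<noteq>c\<and>b\<noteq>d)"
  unfolding modprod_adj_def star_E_def by auto

lemma E_irrefl: "\<not> EE x x" unfolding modprod_adj_def by (auto split: prod.splits)
lemma E_sym: "EE x y = EE y x" by (cases x; cases y) (auto simp: E_iff)

lemma D: assumes "x \<in> star_V s \<times> star_V t" "y \<in> star_V s \<times> star_V t"
  shows "gdist (star_V s \<times> star_V t) EE x y = (if x = y then 0 else if EE x y then 1 else 2)"
proof -
  have u: "(0,0) \<in> star_V s \<times> star_V t" by (simp add: star_V_def)
  have eu: "\<And>z. z \<noteq> (0,0) \<Longrightarrow> EE (0,0) z \<and> EE z (0,0)" by (auto simp: E_iff)
  show ?thesis
  proof (cases "x = y")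
    case True then show ?thesis using gdist_refl assms by simp
  next
    case False
    show ?thesis
    proof (cases "EE x y")
      case True then show ?thesis using gdist_adj assms False by simp
    next
      case nE: False
      then have "x \<noteq> (0,0)" "y \<noteq> (0,0)" using eu False by metis+
      then show ?thesis using gdist_two[OF assms u] eu nE False by simp
    qed
  qed
qed

abbreviation "VV s t \<equiv> star_V s \<times> star_V t"

lemma res_adj: assumes "x \<in> VV s t" "y \<in> VV s t" "z \<in> VV s t" "z \<noteq> x" "z \<noteq> y" "x \<noteq> y"
  "strongly_resolves (VV s t) EE z x y" shows "EE x y"
  using assms(7) unfolding strongly_resolves_def
  using D[OF assms(1) assms(2)] D[OF assms(2) assms(1)] D[OF assms(1) assms(3)] D[OF assms(2) assms(3)]
    assms(4-6) E_sym[of x y]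
  by (auto split: if_splits)

lemma res_by: assumes "x \<in> VV s t" "y \<in> VV s t" "z \<in> VV s t" "z \<noteq> y" "EE x y"
  "EE z x" "\<not> EE z y"
  shows "strongly_resolves (VV s t) EE z x y" "strongly_resolves (VV s t) EE z y x"
  unfolding strongly_resolves_def
  using D[OF assms(1) assms(2)] D[OF assms(2) assms(1)] D[OF assms(1) assms(3)] D[OF assms(2) assms(3)]
    assms(4-7) E_sym[of x y] E_sym[of z x] E_sym[of z y] E_irrefl[of x]
  by (auto split: if_splits)

lemma gen_clique: assumes "strong_metric_generator (VV s t) EE S" "x \<in> VV s t - S" "y \<in> VV s t - S" "x \<noteq> y"
  shows "EE x y"
proof -
  from assms obtain z where z: "z \<in> S" "strongly_resolves (VV s t) EE z x y"
    unfolding strong_metric_generator_def by blast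
  have "z \<in> VV s t" using z assms(1) unfolding strong_metric_generator_def by blast
  then show ?thesis using res_adj[OF _ _ _ _ _ _ z(2)] z(1) assms(2-4) by blast
qed

lemma finV: "finite (VV s t)" by (simp add: star_V_def)
lemma cardV: "card (VV s t) = (s+1)*(t+1)" by (simp add: star_V_def card_cartesian_product)

lemma clique_bound: assumes "K \<subseteq> VV s t" "\<forall>x\<in>K. \<forall>y\<in>K. x \<noteq> y \<longrightarrow> EE x y"
  shows "card K \<le> max (t+1) 4"
proof -
  have fin: "finite K" using assms(1) finV finite_subset by blast
  show ?thesis
  proof (cases "\<exists>a b. (a,b) \<in> K \<and> ((a=0 \<and> b\<noteq>0) \<or> (a\<noteq>0 \<and> b=0))")
    case True
    then obtain a0 b0 where w: "(a0,b0) \<in> K" "(a0=0 \<and> b0\<noteq>0) \<or> (a0\<noteq>0 \<and> b0=0)" by blast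
    define f where "f = (\<lambda>(g::nat,h::nat). (if g=0 then 0 else 2) + (if h=0 then 0 else 1::nat))"
    have inj: "inj_on f K"
    proof (rule inj_onI)
      fix x y assume xy: "x \<in> K" "y \<in> K" "f x = f y"
      obtain a b c d where ab: "x = (a,b)" "y = (c,d)" by (cases x; cases y)
      show "x = y"
      proof (rule ccontr)
        assume ne: "x \<noteq> y"
        then have e: "EE (a,b) (c,d)" using assms(2) xy ab by auto
        have fe: "(a=0 \<longleftrightarrow> c=0) \<and> (b=0 \<longleftrightarrow> d=0)" using xy(3) ab unfolding f_def
          by (auto split: if_splits)
        have e1: "(a0,b0) = (a,b) \<or> EE (a0,b0) (a,b)" using assms(2) xy w ab by auto
        have e2: "(a0,b0) = (c,d) \<or> EE (a0,b0) (c,d)" using assms(2) xy w ab by auto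
        show False using e fe e1 e2 w ne ab by (auto simp: E_iff)
      qed
    qed
    have "f ` K \<subseteq> {0..3}" unfolding f_def by auto
    then have "card (f ` K) \<le> 4" using card_mono[of "{0..3::nat}" "f ` K"] by simp
    then show ?thesis using card_image[OF inj] by simp
  next
    case False
    have inj: "inj_on snd K"
    proof (rule inj_onI)
      fix x y assume xy: "x \<in> K" "y \<in> K" "snd x = snd y"
      obtain a b c d where ab: "x = (a,b)" "y = (c,d)" by (cases x; cases y)
      show "x = y"
      proof (rule ccontr)
        assume ne: "x \<noteq> y"
        then have e: "EE (a,b) (c,d)" using assms(2) xy ab by auto
        show False using e False xy ne ab by (auto simp: E_iff)
      qed
    qed
    have "snd ` K \<subseteq> {0..t}" using assms(1) by (auto simp: star_V_def)
    then have "card (snd ` K) \<le> t+1" using card_mono[of "{0..t}" "snd ` K"] by simp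
    then show ?thesis using card_image[OF inj] by simp
  qed
qed

lemma upper: assumes "W \<subseteq> VV s t" "\<forall>x\<in>W. \<forall>y\<in>W. x \<noteq> y \<longrightarrow> EE x y"
  "\<forall>x\<in>W. \<forall>y\<in>W. x \<noteq> y \<longrightarrow> (\<exists>z\<in>VV s t - W. (EE z x \<and> \<not> EE z y) \<or> (EE z y \<and> \<not> EE z x))"
  shows "strong_metric_generator (VV s t) EE (VV s t - W)"
  unfolding strong_metric_generator_def
proof (intro conjI ballI impI)
  fix x y assume xy: "x \<in> VV s t" "y \<in> VV s t" "x \<noteq> y"
  show "\<exists>z\<in>VV s t - W. strongly_resolves (VV s t) EE z x y"
  proof (cases "x \<in> W \<and> y \<in> W")
    case True
    then obtain z where z: "z \<in> VV s t - W" "(EE z x \<and> \<not> EE z y) \<or> (EE z y \<and> \<not> EE z x)"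
      using assms(3) xy by blast
    have exy: "EE x y" "EE y x" using assms(2) True xy by auto
    have "z \<noteq> x" "z \<noteq> y" using z True by auto
    then have "strongly_resolves (VV s t) EE z x y" using z res_by[of x s t y z] res_by[of y s t x z] xy exy
      by auto
    then show ?thesis using z by blast
  next
    case False
    then have "x \<notin> W \<or> y \<notin> W" by blast
    then show ?thesis
    proof
      assume "x \<notin> W"
      then show ?thesis using xy D[OF xy(2) xy(1)] D[OF xy(1) xy(1)]
        by (intro bexI[of _ x]) (auto simp: strongly_resolves_def)
    next
      assume "y \<notin> W"
      then show ?thesis using xy D[OF xy(1) xy(2)] D[OF xy(2) xy(2)]
        by (intro bexI[of _ y]) (auto simp: strongly_resolves_def)
    qed
  qed
qed auto

lemma lower: assumes "strong_metric_generator (VV s t) EE S"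
  shows "(s+1)*(t+1) - max (t+1) 4 \<le> card S"
proof -
  have S: "S \<subseteq> VV s t" using assms unfolding strong_metric_generator_def by blast
  have "card (VV s t - S) \<le> max (t+1) 4"
    by (rule clique_bound) (use gen_clique[OF assms] in auto)
  moreover have "card (VV s t - S) = card (VV s t) - card S"
    using S finV card_Diff_subset finite_subset by blast
  moreover have "card S \<le> card (VV s t)" using S finV card_mono by blast
  ultimately show ?thesis using cardV[of s t] by linarith
qed

lemma gen2: assumes "2 \<le> s"
  shows "\<exists>S. strong_metric_generator (VV s 2) EE S \<and> card S = s*2+s-1"
proof -
  define W where "W = {(0::nat,0::nat),(0,1),(1,0),(1,1)}"
  have WV: "W \<subseteq> VV s 2" using assms unfolding W_def star_V_def by auto
  have cl: "\<forall>x\<in>W. \<forall>y\<in>W. x \<noteq> y \<longrightarrow> EE x y" unfolding W_def by (simp add: E_iff)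
  have zs: "{(0,2),(2,0),(2,1)} \<subseteq> VV s 2 - W" using assms unfolding W_def star_V_def by auto
  have "\<forall>x\<in>W. \<forall>y\<in>W. x \<noteq> y \<longrightarrow> (\<exists>z\<in>{(0,2),(2,0),(2,1)}. (EE z x \<and> \<not> EE z y) \<or> (EE z y \<and> \<not> EE z x))"
    unfolding W_def by (simp add: E_iff)
  then have sep: "\<forall>x\<in>W. \<forall>y\<in>W. x \<noteq> y \<longrightarrow> (\<exists>z\<in>VV s 2 - W. (EE z x \<and> \<not> EE z y) \<or> (EE z y \<and> \<not> EE z x))"
    using zs by blast
  have cW: "card W = 4" unfolding W_def by simp
  have "card (VV s 2 - W) = card (VV s 2) - card W" using WV finV card_Diff_subset finite_subset by blast
  then have "card (VV s 2 - W) = s*2+s-1" using cW cardV[of s 2] by simp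
  then show ?thesis using upper[OF WV cl sep] by blast
qed

lemma gen3: assumes "3 \<le> t" "t \<le> s"
  shows "\<exists>S. strong_metric_generator (VV s t) EE S \<and> card S = s*t+s"
proof -
  define W where "W = insert (0::nat,0::nat) ((\<lambda>i. (i,i)) ` {1..t})"
  have WV: "W \<subseteq> VV s t" using assms unfolding W_def star_V_def by auto
  have cl: "\<forall>x\<in>W. \<forall>y\<in>W. x \<noteq> y \<longrightarrow> EE x y" unfolding W_def by (auto simp: E_iff)
  have sep: "\<forall>x\<in>W. \<forall>y\<in>W. x \<noteq> y \<longrightarrow> (\<exists>z\<in>VV s t - W. (EE z x \<and> \<not> EE z y) \<or> (EE z y \<and> \<not> EE z x))"
  proof (intro ballI impI)
    fix x y assume xy: "x \<in> W" "y \<in> W" "x \<noteq> y"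
    have A: "\<And>j. 1 \<le> j \<Longrightarrow> j \<le> t \<Longrightarrow> (0,j) \<in> VV s t - W" unfolding W_def star_V_def by auto
    show "\<exists>z\<in>VV s t - W. (EE z x \<and> \<not> EE z y) \<or> (EE z y \<and> \<not> EE z x)"
    proof (cases "x = (0,0)")
      case True
      then obtain i where i: "y = (i,i)" "1 \<le> i" "i \<le> t" using xy unfolding W_def by auto
      let ?j = "if i = 1 then 2 else 1::nat"
      have "(0,?j) \<in> VV s t - W" using A[of ?j] assms by (cases "i = 1") auto
      moreover have "EE (0,?j) x \<and> \<not> EE (0,?j) y" using True i by (auto simp: E_iff)
      ultimately show ?thesis by blast
    next
      case False
      then obtain i where i: "x = (i,i)" "1 \<le> i" "i \<le> t" using xy unfolding W_def by auto
      have z: "(0,i) \<in> VV s t - W" using A i by auto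
      show ?thesis
      proof (cases "y = (0,0)")
        case True
        let ?j = "if i = 1 then 2 else 1::nat"
        have "(0,?j) \<in> VV s t - W" using A[of ?j] assms by (cases "i = 1") auto
        moreover have "EE (0,?j) y \<and> \<not> EE (0,?j) x" using True i by (auto simp: E_iff)
        ultimately show ?thesis by blast
      next
        case False
        then obtain k where k: "y = (k,k)" "1 \<le> k" using xy unfolding W_def by auto
        have "EE (0,i) x \<and> \<not> EE (0,i) y" using i k xy by (auto simp: E_iff)
        then show ?thesis using z by blast
      qed
    qed
  qed
  have cW: "card W = t+1" unfolding W_def by (subst card_insert_disjoint) (auto simp: card_image inj_on_def)
  have "card (VV s t - W) = card (VV s t) - card W" using WV finV card_Diff_subset finite_subset by blast
  then have "card (VV s t - W) = s*t+s" using cW cardV[of s t] by (simp add: algebra_simps)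
  then show ?thesis using upper[OF WV cl sep] by blast
qed

theorem mainTheorem8:
  fixes s t :: nat
  assumes "2 \<le> t" and "t \<le> s"
  shows "strong_metric_dim (star_V s \<times> star_V t) (modprod_adj star_E star_E) =
           (if t = 2 then s * t + s - 1 else s * t + s)"
  unfolding strong_metric_dim_def
proof (rule Least_equality)
  show "\<exists>S. strong_metric_generator (VV s t) EE S \<and> card S = (if t = 2 then s * t + s - 1 else s * t + s)"
    using gen2 gen3 assms by (cases "t = 2") auto
next
  fix k assume "\<exists>S. strong_metric_generator (VV s t) EE S \<and> card S = k"
  then obtain S where S: "strong_metric_generator (VV s t) EE S" "card S = k" by blast
  have l: "(s+1)*(t+1) - max (t+1) 4 \<le> k" using lower[OF S(1)] S(2) by simp
  show "(if t = 2 then s * t + s - 1 else s * t + s) \<le> k"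
  proof (cases "t = 2")
    case True then show ?thesis using l by simp
  next
    case False
    then have "max (t+1) 4 = t+1" using assms by simp
    then have "(s+1)*(t+1) - max (t+1) 4 = s*t+s" by (simp add: algebra_simps)
    then show ?thesis using l False by simp
  qed
qed

end
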